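(* Let $G=(V,E)$ be a finite, connected, simple, undirected, unweighted graph and $i\sim j$ an edge with $d_i\le d_j$. Let $\Omega_j=\sharp_\Delta(i,j)\cup\{j\}$. If $\mathrm{Ric}(i,j)\le-2+\delta$ for some $0<\delta<(1+\gamma_{\max}(i,j))^{-1}$, then $$\frac{1}{|\Omega_j|}\sum_{k\in\Omega_j}b(k)\ \ge\ \delta^{-1}.$$
   Context: Betweenness centrality: $b(k)=\sum_{s,t\in V,\ s\ne t,\ s\ne k,\ t\ne k}\sigma_{st}(k)/\sigma_{st}$, where $\sigma_{st}$ is the number of shortest paths from $s$ to $t$ and $\sigma_{st}(k)$ the number of those passing through $k$. For an edge $i\sim j$ with degrees $d_i,d_j$ and neighbour sets $S_1(\cdot)$: $\sharp_\Delta=S_1(i)\cap S_1(j)$; $\sharp_\square^i=\{k\in S_1(i)\setminus (S_1(j)\cup\{j\}) : \exists\, w\in (S_1(k)\cap S_1(j))\setminus (S_1(i)\cup\{i\})\}$, $\sharp_\square^j$ symmetric; $\gamma_{\max}=\max\big\{\max_{k\in\sharp_\square^i}|(S_1(k)\cap S_1(j))\setminus(S_1(i)\cup\{i\})|,\ \max_{w\in\sharp_\square^j}|(S_1(w)\cap S_1(i))\setminus(S_1(j)\cup\{j\})|\big\}$, with $\gamma_{\max}=0$ if $\sharp_\square^i=\emptyset$. $\mathrm{Ric}(i,j)=0$ if $\min\{d_i,d_j\}=1$, otherwise $\mathrm{Ric}(i,j)=\frac{2}{d_i}+\frac{2}{d_j}-2+\frac{2|\sharp_\Delta|}{\max\{d_i,d_j\}}+\frac{|\sharp_\Delta|}{\min\{d_i,d_j\}}+\frac{\gamma_{\max}^{-1}}{\max\{d_i,d_j\}}(|\sharp_\square^i|+|\sharp_\square^j|)$,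 the last term being $0$ when $\sharp_\square^i=\emptyset$. *)

theory Defs
  imports Main "HOL-Library.Extended_Real"
begin

definition simple_graph :: "'a set \<Rightarrow> ('a \<Rightarrow> 'a \<Rightarrow> bool) \<Rightarrow> bool" where
  "simple_graph V E \<longleftrightarrow> finite V \<and> (\<forall>x y. E x y \<longrightarrow> x \<in> V \<and> y \<in> V)
     \<and> (\<forall>x y. E x y \<longrightarrow> E y x) \<and> (\<forall>x. \<not> E x x)"

definition walk :: "'a set \<Rightarrow> ('a \<Rightarrow> 'a \<Rightarrow> bool) \<Rightarrow> 'a \<Rightarrow> 'a \<Rightarrow> 'a list \<Rightarrow> bool" where
  "walk V E s t p \<longleftrightarrow> p \<noteq> [] \<and> hd p = s \<and> last p = t \<and> set p \<subseteq> V
     \<and> (\<forall>n. Suc n < length p \<longrightarrow> E (p ! n) (p ! Suc n))"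

definition connected_graph :: "'a set \<Rightarrow> ('a \<Rightarrow> 'a \<Rightarrow> bool) \<Rightarrow> bool" where
  "connected_graph V E \<longleftrightarrow> (\<forall>s\<in>V. \<forall>t\<in>V. \<exists>p. walk V E s t p)"

definition gdist :: "'a set \<Rightarrow> ('a \<Rightarrow> 'a \<Rightarrow> bool) \<Rightarrow> 'a \<Rightarrow> 'a \<Rightarrow> nat" where
  "gdist V E s t = (LEAST n. \<exists>p. walk V E s t p \<and> length p = Suc n)"

definition shortest_paths :: "'a set \<Rightarrow> ('a \<Rightarrow> 'a \<Rightarrow> bool) \<Rightarrow> 'a \<Rightarrow> 'a \<Rightarrow> 'a list set" where
  "shortest_paths V E s t = {p. walk V E s t p \<and> length p = Suc (gdist V E s t)}"

definition sigma :: "'a set \<Rightarrow> ('a \<Rightarrow> 'a \<Rightarrow> bool) \<Rightarrow> 'a \<Rightarrow> 'a \<Rightarrow> nat" where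
  "sigma V E s t = card (shortest_paths V E s t)"

definition sigma_via :: "'a set \<Rightarrow> ('a \<Rightarrow> 'a \<Rightarrow> bool) \<Rightarrow> 'a \<Rightarrow> 'a \<Rightarrow> 'a \<Rightarrow> nat" where
  "sigma_via V E s t k = card {p \<in> shortest_paths V E s t. k \<in> set p}"

definition betweenness :: "'a set \<Rightarrow> ('a \<Rightarrow> 'a \<Rightarrow> bool) \<Rightarrow> 'a \<Rightarrow> real" where
  "betweenness V E k = (\<Sum>(s,t)\<in>{(s,t). s \<in> V \<and> t \<in> V \<and> s \<noteq> t \<and> s \<noteq> k \<and> t \<noteq> k}.
      real (sigma_via V E s t k) / real (sigma V E s t))"

definition nbrs :: "'a set \<Rightarrow> ('a \<Rightarrow> 'a \<Rightarrow> bool) \<Rightarrow> 'a \<Rightarrow> 'a set" where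
  "nbrs V E x = {y \<in> V. E x y}"

definition deg :: "'a set \<Rightarrow> ('a \<Rightarrow> 'a \<Rightarrow> bool) \<Rightarrow> 'a \<Rightarrow> nat" where
  "deg V E x = card (nbrs V E x)"

definition triangles :: "'a set \<Rightarrow> ('a \<Rightarrow> 'a \<Rightarrow> bool) \<Rightarrow> 'a \<Rightarrow> 'a \<Rightarrow> 'a set" where
  "triangles V E i j = nbrs V E i \<inter> nbrs V E j"

definition sq_wit :: "'a set \<Rightarrow> ('a \<Rightarrow> 'a \<Rightarrow> bool) \<Rightarrow> 'a \<Rightarrow> 'a \<Rightarrow> 'a \<Rightarrow> 'a set" where
  "sq_wit V E i j k = (nbrs V E k \<inter> nbrs V E j) - (nbrs V E i \<union> {i})"

text \<open>\<sharp>_\<box>^i for the edge (i,j); \<sharp>_\<box>^j is squares V E j i.\<close>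
definition squares :: "'a set \<Rightarrow> ('a \<Rightarrow> 'a \<Rightarrow> bool) \<Rightarrow> 'a \<Rightarrow> 'a \<Rightarrow> 'a set" where
  "squares V E i j = {k \<in> nbrs V E i - (nbrs V E j \<union> {j}). sq_wit V E i j k \<noteq> {}}"

definition gamma_max :: "'a set \<Rightarrow> ('a \<Rightarrow> 'a \<Rightarrow> bool) \<Rightarrow> 'a \<Rightarrow> 'a \<Rightarrow> nat" where
  "gamma_max V E i j = (if squares V E i j = {} then 0 else
     max (Max ((\<lambda>k. card (sq_wit V E i j k)) ` squares V E i j))
         (Max ((\<lambda>w. card (sq_wit V E j i w)) ` squares V E j i)))"

definition Ric :: "'a set \<Rightarrow> ('a \<Rightarrow> 'a \<Rightarrow> bool) \<Rightarrow> 'a \<Rightarrow> 'a \<Rightarrow> real" where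
  "Ric V E i j = (let di = real (deg V E i); dj = real (deg V E j);
       t = real (card (triangles V E i j)) in
     if min di dj = 1 then 0 else
       2 / di + 2 / dj - 2 + 2 * t / max di dj + t / min di dj
       + (if squares V E i j = {} then 0 else
           (inverse (real (gamma_max V E i j)) / max di dj)
             * real (card (squares V E i j) + card (squares V E j i))))"

end

theory Submission
  imports Defs
begin

lemma walk3: "walk V E s t [a,b,c] \<longleftrightarrow> a = s \<and> c = t \<and> a \<in> V \<and> b \<in> V \<and> c \<in> V \<and> E a b \<and> E b c"
proof -
  have "(\<forall>n. Suc n < length [a,b,c] \<longrightarrow> E ([a,b,c] ! n) ([a,b,c] ! Suc n)) \<longleftrightarrow> E a b \<and> E b c"
  proof
    assume h: "\<forall>n. Suc n < length [a,b,c] \<longrightarrow> E ([a,b,c] ! n) ([a,b,c] ! Suc n)"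
    show "E a b \<and> E b c" using h[rule_format, of 0] h[rule_format, of 1] by simp
  next
    assume "E a b \<and> E b c"
    then show "\<forall>n. Suc n < length [a,b,c] \<longrightarrow> E ([a,b,c] ! n) ([a,b,c] ! Suc n)"
      by (auto simp: less_Suc_eq nth_Cons split: nat.splits)
  qed
  then show ?thesis unfolding walk_def by auto
qed

lemma len3: "length p = 3 \<Longrightarrow> \<exists>a b c. p = [a,b,c]"
  by (auto simp: numeral_3_eq_3 length_Suc_conv)

lemma gdist2:
  assumes "i \<noteq> t" "\<not> E i t" "E i k" "E k t" "i \<in> V" "k \<in> V" "t \<in> V"
  shows "gdist V E i t = 2"
  unfolding gdist_def
proof (rule Least_equality)
  show "\<exists>p. walk V E i t p \<and> length p = Suc 2"
    by (rule exI[of _ "[i,k,t]"]) (simp add: walk3 assms)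
next
  fix n assume "\<exists>p. walk V E i t p \<and> length p = Suc n"
  then obtain p where p: "walk V E i t p" "length p = Suc n" by blast
  show "2 \<le> n"
  proof (rule ccontr)
    assume "\<not> 2 \<le> n"
    then have "n = 0 \<or> n = 1" by auto
    then show False
    proof
      assume "n = 0"
      then obtain a where "p = [a]" using p(2) by (auto simp: length_Suc_conv)
      then show False using p(1) assms(1) by (auto simp: walk_def)
    next
      assume "n = 1"
      then obtain a b where ab: "p = [a,b]" using p(2) by (auto simp: length_Suc_conv)
      then have "E a b" using p(1) unfolding walk_def by (metis One_nat_def length_Cons list.size(3) lessI nth_Cons_0 nth_Cons_Suc)
      then show False using p(1) ab assms(2) by (simp add: walk_def)
    qed
  qed
qed

lemma sp2:
  assumes sg: "simple_graph V E" and "i \<noteq> t" "\<not> E i t" "E i k" "E k t" "i \<in> V" "k \<in> V" "t \<in> V"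
  shows "sigma V E i t = card (nbrs V E i \<inter> nbrs V E t)"
   and "\<And>x. x \<noteq> i \<Longrightarrow> x \<noteq> t \<Longrightarrow> sigma_via V E i t x = (if x \<in> nbrs V E i \<inter> nbrs V E t then 1 else 0)"
proof -
  have sym: "\<And>x y. E x y \<Longrightarrow> E y x" using sg by (simp add: simple_graph_def)
  have g: "gdist V E i t = 2" by (rule gdist2[OF assms(2-)])
  have S: "shortest_paths V E i t = (\<lambda>k. [i,k,t]) ` (nbrs V E i \<inter> nbrs V E t)"
  proof (intro set_eqI iffI)
    fix p assume "p \<in> shortest_paths V E i t"
    then have p: "walk V E i t p" "length p = 3" by (auto simp: shortest_paths_def g)
    then obtain a b c where "p = [a,b,c]" using len3 by blast
    then show "p \<in> (\<lambda>k. [i,k,t]) ` (nbrs V E i \<inter> nbrs V E t)"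
      using p(1) by (auto simp: walk3 nbrs_def intro: sym)
  next
    fix p assume "p \<in> (\<lambda>k. [i,k,t]) ` (nbrs V E i \<inter> nbrs V E t)"
    then show "p \<in> shortest_paths V E i t"
      using assms by (auto simp: shortest_paths_def g walk3 nbrs_def intro: sym)
  qed
  have inj: "inj (\<lambda>k. [i,k,t])" by (auto simp: inj_def)
  show "sigma V E i t = card (nbrs V E i \<inter> nbrs V E t)"
    unfolding sigma_def S by (rule card_image) (auto simp: inj_on_def)
  fix x assume x: "x \<noteq> i" "x \<noteq> t"
  have "{p \<in> shortest_paths V E i t. x \<in> set p} = (if x \<in> nbrs V E i \<inter> nbrs V E t then {[i,x,t]} else {})"
    unfolding S using x by auto
  then show "sigma_via V E i t x = (if x \<in> nbrs V E i \<inter> nbrs V E t then 1 else 0)"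
    unfolding sigma_via_def by simp
qed


lemma arith_final:
  fixes dj tt q g d a S :: real
  assumes "0 < d" "d < 1" "d * (1 + g) < 1" "0 \<le> tt" "0 \<le> q" "g \<ge> 1"
    and "4 + 3*tt + q/g \<le> d * dj" "a = dj - 1 - tt" "S \<ge> (a - q) + q/(1+g)"
  shows "(1/(tt+1)) * S \<ge> inverse d"
proof -
  have dg: "d * g * g \<le> 1 + g"
  proof -
    have d1: "d \<le> 1/(1+g)" using assms(3,6) by (simp add: pos_le_divide_eq less_imp_le)
    have "d * (g * g) \<le> 1/(1+g) * (g*g)" by (rule mult_right_mono[OF d1]) simp
    then have "d * g * g \<le> g*g/(1+g)" by (simp add: mult.assoc)
    also have "\<dots> \<le> 1 + g" using assms(6) by (simp add: field_simps)
    finally show ?thesis .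
  qed
  have k: "d * (q * g / (1+g)) \<le> q / g"
  proof -
    have g0: "g \<noteq> 0" "1 + g \<noteq> 0" "g * (1+g) \<noteq> 0" "g + g*g \<noteq> 0" using assms(6) by (auto, smt (verit) mult_nonneg_nonneg)
    have "d * (q * g / (1+g)) = q * (d*g*g) / (g*(1+g))" using g0 by (simp add: field_simps)
    also have "\<dots> \<le> q * (1+g) / (g*(1+g))" using dg assms(5,6)
      by (intro divide_right_mono mult_left_mono) auto
    also have "\<dots> = q/g" using g0 by (simp add: field_simps)
    finally show ?thesis .
  qed
  have e: "(a - q) + q/(1+g) = a - q*g/(1+g)" using assms(6) by (simp add: field_simps)
  have "d * S \<ge> d * (a - q*g/(1+g))" using assms(1,9) e by (simp add: mult_left_mono)
  moreover have "d * (a - q*g/(1+g)) \<ge> tt + 1"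
  proof -
    have "d * (a - q*g/(1+g)) = d*dj - d*(1+tt) - d*(q*g/(1+g))" unfolding assms(8) by (simp add: algebra_simps)
    moreover have "d*(1+tt) \<le> 1 + tt" using assms(2,4) by (simp add: mult_right_le_one_le mult_left_le_one_le)
    ultimately show ?thesis using k assms(7) assms(4) by linarith
  qed
  ultimately have "d * S \<ge> tt + 1" by linarith
  then have "(tt+1) / d \<le> S" using assms(1) by (simp add: pos_divide_le_eq mult.commute)
  moreover have "(1/(tt+1)) * ((tt+1)/d) = inverse d" using assms(4) by (simp add: divide_inverse)
  ultimately show ?thesis using assms(4) by (metis mult_left_mono divide_nonneg_nonneg zero_le_one add_nonneg_nonneg)
qed


lemma arith_final0:
  fixes dj tt d a S :: real
  assumes "0 < d" "d < 1" "0 \<le> tt"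
    and "4 + 3*tt \<le> d * dj" "a = dj - 1 - tt" "S \<ge> a"
  shows "(1/(tt+1)) * S \<ge> inverse d"
proof -
  have "d * S \<ge> d * a" using assms by (simp add: mult_left_mono)
  moreover have "d * a = d*dj - d*(1+tt)" unfolding assms(5) by (simp add: algebra_simps)
  moreover have "d*(1+tt) \<le> 1 + tt" using assms(2,3) by (simp add: mult_left_le_one_le)
  ultimately have "d * S \<ge> tt + 1" using assms(4) assms(3) by linarith
  then have "(tt+1) / d \<le> S" using assms(1) by (simp add: pos_divide_le_eq mult.commute)
  moreover have "(1/(tt+1)) * ((tt+1)/d) = inverse d" using assms(3) by (simp add: divide_inverse)
  ultimately show ?thesis using assms(3) by (metis mult_left_mono divide_nonneg_nonneg zero_le_one add_nonneg_nonneg)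
qed

theorem mainTheorem10:
  fixes V :: "'a set" and E :: "'a \<Rightarrow> 'a \<Rightarrow> bool" and i j :: 'a and \<delta> :: real
  assumes "simple_graph V E" and "connected_graph V E"
    and "E i j" and "deg V E i \<le> deg V E j"
    and "0 < \<delta>" and "\<delta> < inverse (1 + real (gamma_max V E i j))"
    and "Ric V E i j \<le> -2 + \<delta>"
  shows "(1 / real (card (triangles V E i j \<union> {j})))
           * (\<Sum>k\<in>triangles V E i j \<union> {j}. betweenness V E k) \<ge> inverse \<delta>"
proof -
  note sg = assms(1)
  have finV: "finite V" and EV: "\<And>x y. E x y \<Longrightarrow> x \<in> V \<and> y \<in> V"
    and sym: "\<And>x y. E x y \<Longrightarrow> E y x" and irr: "\<And>x. \<not> E x x"
    using sg unfolding simple_graph_def by blast+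
  define N where "N = nbrs V E"
  have Nmem: "y \<in> N x \<longleftrightarrow> y \<in> V \<and> E x y" for x y by (simp add: N_def nbrs_def)
  have finN: "finite (N x)" for x using finV by (auto simp: N_def nbrs_def)
  have iV: "i \<in> V" and jV: "j \<in> V" using EV[OF assms(3)] by auto
  define T where "T = N i \<inter> N j"
  have T_eq: "triangles V E i j = T" by (simp add: T_def N_def triangles_def)
  define Om where "Om = T \<union> {j}"
  define NP where "NP = N j - (N i \<union> {i})"
  define Q where "Q = squares V E j i"
  define \<gamma> where "\<gamma> = real (gamma_max V E i j)"
  have finT: "finite T" using finN by (simp add: T_def)
  have jT: "j \<notin> T" using irr by (auto simp: T_def Nmem)
  have cardOm: "card Om = card T + 1" using finT jT by (simp add: Om_def)
  have NjU: "N j = NP \<union> T \<union> {i}" using assms(3) sym iV by (auto simp: NP_def T_def Nmem)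
  have finNP: "finite NP" using finN by (simp add: NP_def)
  have cardNj: "card (N j) = card NP + card T + 1"
  proof -
    have "card (NP \<union> T \<union> {i}) = card (NP \<union> T) + 1"
      using finNP finT irr by (simp add: NP_def T_def Nmem)
    also have "card (NP \<union> T) = card NP + card T"
      using finNP finT by (intro card_Un_disjoint) (auto simp: NP_def T_def)
    finally show ?thesis using NjU by simp
  qed
  have QNP: "Q \<subseteq> NP" by (auto simp: Q_def squares_def NP_def N_def)
  have finQ: "finite Q" using QNP finNP finite_subset by blast
  have cQ: "card Q \<le> card NP" using QNP finNP by (rule card_mono[rotated])
  have gam0: "\<gamma> \<ge> 0" by (simp add: \<gamma>_def)

  have finsw: "finite (sq_wit V E a b c)" for a b c
    using finN by (simp add: sq_wit_def N_def[symmetric])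
  have sqij: "squares V E i j \<noteq> {}" if "t \<in> Q" for t
  proof -
    from that obtain w where w: "w \<in> sq_wit V E j i t" and t: "t \<in> NP"
      using QNP by (auto simp: Q_def squares_def)
    have "t \<in> sq_wit V E i j w" using w t sym by (auto simp: sq_wit_def NP_def N_def nbrs_def)
    then have "w \<in> squares V E i j" using w by (auto simp: squares_def sq_wit_def)
    then show ?thesis by blast
  qed
  have cgam: "real (card (sq_wit V E j i t)) \<le> \<gamma>" if "t \<in> Q" for t
  proof -
    have finsq: "finite (squares V E j i)" using finN
      by (rule finite_subset[rotated]) (auto simp: squares_def N_def)
    have "card (sq_wit V E j i t) \<le> Max ((\<lambda>w. card (sq_wit V E j i w)) ` squares V E j i)"
      using that finsq by (intro Max_ge) (auto simp: Q_def)
    then show ?thesis using sqij[OF that] by (simp add: \<gamma>_def gamma_max_def)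
  qed
  have gam1: "\<gamma> \<ge> 1" if "Q \<noteq> {}"
  proof -
    from that obtain t where t: "t \<in> Q" by blast
    then have "sq_wit V E j i t \<noteq> {}" by (simp add: Q_def squares_def)
    then have "card (sq_wit V E j i t) \<ge> 1" using finsw by (simp add: Suc_le_eq card_gt_0_iff)
    then show ?thesis using cgam[OF t] by linarith
  qed

  define h where "h k t = real (sigma_via V E i t k) / real (sigma V E i t)" for k t
  have pert: "(\<Sum>k\<in>Om. h k t) \<ge> (if t \<in> Q then 1/(1+\<gamma>) else 1)" if t: "t \<in> NP" for t
  proof -
    have tV: "t \<in> V" and Ejt: "E j t" and nit: "\<not> E i t" and ti: "t \<noteq> i"
      using t by (auto simp: NP_def Nmem)
    define M where "M = N i \<inter> N t"
    have sig: "sigma V E i t = card M"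
      using sp2(1)[OF sg ti[symmetric] nit assms(3) Ejt iV jV tV] by (simp add: M_def N_def)
    have sv: "sigma_via V E i t x = (if x \<in> M then 1 else 0)" if "x \<in> Om" for x
    proof -
      have "x \<noteq> i" "x \<noteq> t" using that irr Ejt t by (auto simp: Om_def T_def Nmem NP_def)
      then show ?thesis using sp2(2)[OF sg ti[symmetric] nit assms(3) Ejt iV jV tV] by (simp add: M_def N_def)
    qed
    have finM: "finite M" using finN by (simp add: M_def)
    have jM: "j \<in> Om \<inter> M" using assms(3) Ejt sym jV by (auto simp: Om_def M_def Nmem)
    have m1: "card (Om \<inter> M) \<ge> 1" using jM finM by (metis One_nat_def Suc_le_eq card_gt_0_iff empty_iff finite_Int)
    have MO: "M - Om = sq_wit V E j i t" by (auto simp: M_def Om_def T_def sq_wit_def N_def)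
    have cM: "card M = card (Om \<inter> M) + card (sq_wit V E j i t)"
    proof -
      have "M = (Om \<inter> M) \<union> (M - Om)" by blast
      then have "card M = card (Om \<inter> M) + card (M - Om)"
        using finM by (metis card_Un_disjoint Diff_disjoint finite_Diff finite_Int Int_Diff_disjoint Int_commute)
      then show ?thesis using MO by simp
    qed
    have "(\<Sum>k\<in>Om. h k t) = (\<Sum>k\<in>Om. (if k \<in> M then 1 else 0) / real (card M))"
      by (rule sum.cong) (auto simp: h_def sv sig)
    also have "\<dots> = (\<Sum>k\<in>Om. (if k \<in> M then 1 else 0)) / real (card M)"
      by (simp add: sum_divide_distrib[symmetric])
    also have "(\<Sum>k\<in>Om. (if k \<in> M then 1 else 0)) = (\<Sum>k\<in>{x\<in>Om. x \<in> M}. (1::real))"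
      using sum.inter_filter[of Om "\<lambda>_. 1::real" "\<lambda>x. x\<in>M"] finT by (simp add: Om_def)
    also have "{x\<in>Om. x \<in> M} = Om \<inter> M" by blast
    finally have eq: "(\<Sum>k\<in>Om. h k t) = real (card (Om \<inter> M)) / real (card M)" by simp
    show ?thesis
    proof (cases "t \<in> Q")
      case True
      define m where "m = real (card (Om \<inter> M))"
      define c where "c = real (card (sq_wit V E j i t))"
      have "m \<ge> 1" using m1 by (simp add: m_def)
      have "c \<le> \<gamma>" using cgam[OF True] by (simp add: c_def)
      have c0: "c \<ge> 0" by (simp add: c_def)
      have "m / (m + c) \<ge> 1 / (1 + \<gamma>)"
      proof -
        have "1 * \<gamma> \<le> m * \<gamma>" using \<open>m \<ge> 1\<close> gam0 by (rule mult_right_mono)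
        then have "m + c \<le> m * (1 + \<gamma>)" using \<open>c \<le> \<gamma>\<close> by (simp add: algebra_simps)
        then show ?thesis using \<open>m \<ge> 1\<close> c0 gam0 by (simp add: divide_simps)
      qed
      then show ?thesis using True eq cM by (simp add: m_def c_def)
    next
      case False
      then have "sq_wit V E j i t = {}" using t by (auto simp: Q_def squares_def NP_def N_def)
      then have "card M = card (Om \<inter> M)" using cM by simp
      then show ?thesis using False eq m1 by simp
    qed
  qed

  have bk: "betweenness V E k \<ge> (\<Sum>t\<in>NP. h k t)" if k: "k \<in> Om" for k
  proof -
    define P where "P = {(s,t). s \<in> V \<and> t \<in> V \<and> s \<noteq> t \<and> s \<noteq> k \<and> t \<noteq> k}"
    define f where "f = (\<lambda>(s,t). real (sigma_via V E s t k) / real (sigma V E s t))"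
    have finP: "finite P" by (rule finite_subset[of _ "V \<times> V"]) (auto simp: P_def finV)
    have sub: "Pair i ` NP \<subseteq> P"
      using k irr iV by (auto simp: P_def NP_def Om_def T_def Nmem)
    have "(\<Sum>t\<in>NP. h k t) = sum f (Pair i ` NP)"
      by (subst sum.reindex) (auto simp: inj_on_def f_def h_def)
    also have "\<dots> \<le> sum f P"
      by (rule sum_mono2[OF finP sub]) (auto simp: f_def)
    also have "\<dots> = betweenness V E k" by (simp add: betweenness_def P_def f_def)
    finally show ?thesis .
  qed
  define S where "S = (\<Sum>k\<in>Om. betweenness V E k)"
  have S1: "S \<ge> (\<Sum>k\<in>Om. \<Sum>t\<in>NP. h k t)" unfolding S_def by (rule sum_mono) (rule bk)
  also have "(\<Sum>k\<in>Om. \<Sum>t\<in>NP. h k t) = (\<Sum>t\<in>NP. \<Sum>k\<in>Om. h k t)" by (rule sum.swap)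
  finally have S2: "S \<ge> (\<Sum>t\<in>NP. (if t \<in> Q then 1/(1+\<gamma>) else 1))"
    using sum_mono[of NP "\<lambda>t. (if t \<in> Q then 1/(1+\<gamma>) else 1)" "\<lambda>t. \<Sum>k\<in>Om. h k t", OF pert] by linarith
  have "(\<Sum>t\<in>NP. (if t \<in> Q then 1/(1+\<gamma>) else 1)) = real (card Q) / (1+\<gamma>) + real (card (NP - Q))"
    using finNP QNP by (simp add: sum.If_cases Int_absorb1 Int_commute Diff_eq[symmetric])
  also have "real (card (NP - Q)) = real (card NP) - real (card Q)"
    using QNP finQ cQ by (simp add: card_Diff_subset of_nat_diff)
  finally have S3: "S \<ge> (real (card NP) - real (card Q)) + real (card Q) / (1+\<gamma>)" using S2 by linarith

  define di where "di = real (card (N i))"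
  define dj where "dj = real (card (N j))"
  define tt where "tt = real (card T)"
  define q where "q = real (card Q)"
  have dij: "di \<le> dj" using assms(4) by (simp add: di_def dj_def deg_def N_def)
  have di1: "di \<ge> 1"
  proof -
    have "j \<in> N i" using assms(3) jV by (simp add: Nmem)
    then have "card (N i) \<ge> 1" using finN by (metis One_nat_def Suc_le_eq card_gt_0_iff empty_iff)
    then show ?thesis by (simp add: di_def)
  qed
  have tt0: "tt \<ge> 0" by (simp add: tt_def)
  have q0: "q \<ge> 0" by (simp add: q_def)
  have dlt: "\<delta> * (1+\<gamma>) < 1"
  proof -
    have "\<delta> * (1+\<gamma>) < inverse (1+\<gamma>) * (1+\<gamma>)"
      using assms(6) gam0 by (intro mult_strict_right_mono) (auto simp: \<gamma>_def)
    then show ?thesis using gam0 by simp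
  qed
  have d1: "\<delta> < 1"
  proof -
    have "\<delta> * 1 \<le> \<delta> * (1+\<gamma>)" using gam0 assms(5) by (intro mult_left_mono) auto
    then show ?thesis using dlt by simp
  qed
  have R: "Ric V E i j = (if min di dj = 1 then 0 else 2/di + 2/dj - 2 + 2*tt/max di dj + tt/min di dj
      + (if squares V E i j = {} then 0 else (inverse \<gamma> / max di dj) * real (card (squares V E i j) + card Q)))"
    by (simp add: Ric_def Let_def di_def dj_def tt_def T_eq deg_def N_def \<gamma>_def Q_def)
  have dine1: "di \<noteq> 1"
  proof
    assume "di = 1"
    then have "min di dj = 1" using dij by simp
    then have "Ric V E i j = 0" using R by simp
    then show False using assms(7) d1 by simp
  qed
  have di2: "di > 1" using di1 dine1 by simp
  have mn: "min di dj = di" "max di dj = dj" using dij by auto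
  have "min di dj \<noteq> 1" using mn dine1 by simp
  define St where "St = (if squares V E i j = {} then 0 else (inverse \<gamma> / dj) * real (card (squares V E i j) + card Q))"
  have R2: "2/di + 2/dj - 2 + 2*tt/dj + tt/di + St \<le> -2 + \<delta>"
    using assms(7) R mn dine1 by (simp add: St_def)
  have djpos: "dj > 0" using di2 dij by simp
  have a1: "2/dj \<le> 2/di" using di2 dij by (intro divide_left_mono) auto
  have a2: "tt/dj \<le> tt/di" using di2 dij tt0 by (intro divide_left_mono) auto
  define X where "X = (if Q = {} then 0 else q / \<gamma>)"
  have Xle: "X / dj \<le> St"
  proof (cases "Q = {}")
    case True
    then show ?thesis using gam0 djpos by (simp add: X_def St_def)
  next
    case False
    then obtain t where "t \<in> Q" by blast
    then have ne: "squares V E i j \<noteq> {}" by (rule sqij)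
    have "X / dj = (inverse \<gamma> / dj) * q" using False by (simp add: X_def divide_inverse)
    also have "\<dots> \<le> (inverse \<gamma> / dj) * real (card (squares V E i j) + card Q)"
      using gam0 djpos by (intro mult_left_mono) (auto simp: q_def)
    finally show ?thesis using ne by (simp add: St_def)
  qed
  have "(4 + 3*tt + X) / dj \<le> \<delta>"
  proof -
    have "(4 + 3*tt + X) / dj = 2/dj + 2/dj + 2*tt/dj + tt/dj + X/dj" by (simp add: add_divide_distrib)
    then show ?thesis using R2 a1 a2 Xle by linarith
  qed
  then have key: "4 + 3*tt + X \<le> \<delta> * dj" using djpos by (simp add: pos_divide_le_eq mult.commute)
  have cardNPr: "real (card NP) = dj - 1 - tt" using cardNj by (simp add: dj_def tt_def)
  have Omr: "real (card (triangles V E i j \<union> {j})) = tt + 1"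
    using cardOm by (simp add: T_eq Om_def tt_def)
  have SS: "(\<Sum>k\<in>triangles V E i j \<union> {j}. betweenness V E k) = S" by (simp add: S_def Om_def T_eq)
  show ?thesis
  proof (cases "Q = {}")
    case True
    have "S \<ge> real (card NP)" using S3 True by simp
    then have "(1/(tt+1)) * S \<ge> inverse \<delta>"
      using arith_final0[OF assms(5) d1 tt0 _ cardNPr] key True by (simp add: X_def)
    then show ?thesis using Omr SS by simp
  next
    case False
    have "(1/(tt+1)) * S \<ge> inverse \<delta>"
      using arith_final[OF assms(5) d1 dlt tt0 q0 gam1[OF False] _ cardNPr] key False S3
      by (simp add: X_def q_def)
    then show ?thesis using Omr SS by simp
  qed
qed

end
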